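(* Let $N\ge3$, $\frac{N}{N-1}<p<2$, $\xi=(p-1)(N-1)$, $\beta=\frac{p-1}{\xi-1}$, $\sigma=\frac{2-p}{p-1}$, and let $0<R\le\infty$ and $0\le t\le\infty$. (a) If $\varphi\in X_1(B_R)$ satisfies $L_t^{+}(\varphi)=0$ in $B_R\setminus\{0\}$, with $\varphi=0$ on $\partial B_R$ when $R$ is finite, then $\varphi=0$. (b) If $\varphi\in X(B_R)$ satisfies $L_t^{-}(\varphi)=0$ in $B_R\setminus\{0\}$, with $\varphi=0$ on $\partial B_R$ when $R$ is finite, then $\varphi=0$ when $R$ is finite, and $\varphi$ is constant when $R=\infty$.
   Context: For $0\le t<\infty$, $L_t^{\pm}(\zeta)=-\Delta\zeta\pm\frac{p}{t|x|^{\xi-1}+\beta}\frac{x\cdot\nabla\zeta}{|x|^2}$; for $t=\infty$ the operator is understood as the limit $L_\infty^{\pm}=-\Delta$. $B_R=\{|x|<R\}$ ($B_\infty=\mathbb{R}^N$). $X(B_R)$ is the set of functions $\varphi$ on $B_R\setminus\{0\}$ with $\sup_{0<|x|<R}\{|x|^{\sigma}|\varphi(x)|+|x|^{\sigma+1}|\nabla\varphi(x)|\}<\infty$; $X_1(B_R)$ is the subspace of those with $\int_{S^{N-1}}\varphi(r\theta)\,d\theta=0$ for all $0<r<R$. *)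

theory Defs
  imports "HOL-Analysis.Analysis"
begin

definition punct :: "ereal \<Rightarrow> 'a::euclidean_space set" where
  "punct R = {x. 0 < norm x \<and> ereal (norm x) < R}"

definition pderiv :: "('a::euclidean_space \<Rightarrow> real) \<Rightarrow> 'a \<Rightarrow> 'a \<Rightarrow> real" where
  "pderiv f i x = frechet_derivative f (at x) i"

definition grad :: "('a::euclidean_space \<Rightarrow> real) \<Rightarrow> 'a \<Rightarrow> 'a" where
  "grad f x = (\<Sum>i\<in>Basis. pderiv f i x *\<^sub>R i)"

definition laplacian :: "('a::euclidean_space \<Rightarrow> real) \<Rightarrow> 'a \<Rightarrow> real" where
  "laplacian f x = (\<Sum>i\<in>Basis. pderiv (pderiv f i) i x)"

definition C2_on :: "'a::euclidean_space set \<Rightarrow> ('a \<Rightarrow> real) \<Rightarrow> bool" where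
  "C2_on U f \<longleftrightarrow> (\<forall>x\<in>U. f differentiable at x) \<and>
     (\<forall>i\<in>Basis. \<forall>x\<in>U. pderiv f i differentiable at x) \<and>
     (\<forall>i\<in>Basis. \<forall>j\<in>Basis. continuous_on U (pderiv (pderiv f i) j))"

text \<open>Coefficient p/(t |x|^(xi-1) + beta); for t = \<infinity> it is 0 (so L_\<infinity> = -Delta).\<close>
definition Lcoef :: "real \<Rightarrow> real \<Rightarrow> real \<Rightarrow> ereal \<Rightarrow> 'a::euclidean_space \<Rightarrow> real" where
  "Lcoef p \<xi> \<beta> t x = (case t of ereal s \<Rightarrow> p / (s * norm x powr (\<xi> - 1) + \<beta>) | _ \<Rightarrow> 0)"

definition Lplus :: "real \<Rightarrow> real \<Rightarrow> real \<Rightarrow> ereal \<Rightarrow> ('a::euclidean_space \<Rightarrow> real) \<Rightarrow> 'a \<Rightarrow> real" where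
  "Lplus p \<xi> \<beta> t f x = - laplacian f x + Lcoef p \<xi> \<beta> t x * ((x \<bullet> grad f x) / (norm x)\<^sup>2)"

definition Lminus :: "real \<Rightarrow> real \<Rightarrow> real \<Rightarrow> ereal \<Rightarrow> ('a::euclidean_space \<Rightarrow> real) \<Rightarrow> 'a \<Rightarrow> real" where
  "Lminus p \<xi> \<beta> t f x = - laplacian f x - Lcoef p \<xi> \<beta> t x * ((x \<bullet> grad f x) / (norm x)\<^sup>2)"

definition inX :: "real \<Rightarrow> ereal \<Rightarrow> ('a::euclidean_space \<Rightarrow> real) \<Rightarrow> bool" where
  "inX \<sigma> R f \<longleftrightarrow> (\<exists>C. \<forall>x\<in>punct R.
      norm x powr \<sigma> * \<bar>f x\<bar> + norm x powr (\<sigma> + 1) * norm (grad f x) \<le> C)"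

text \<open>Integral over the unit sphere S^{N-1} w.r.t. surface measure, via the cone
  measure identity  int_S g d(theta) = N * int_{B_1} g(x/|x|) dx.\<close>
definition sphere_integral :: "('a::euclidean_space \<Rightarrow> real) \<Rightarrow> real" where
  "sphere_integral g = real DIM('a) * integral (ball 0 1) (\<lambda>x. g (x /\<^sub>R norm x))"

definition inX1 :: "real \<Rightarrow> ereal \<Rightarrow> ('a::euclidean_space \<Rightarrow> real) \<Rightarrow> bool" where
  "inX1 \<sigma> R f \<longleftrightarrow> inX \<sigma> R f \<and>
     (\<forall>r. 0 < r \<and> ereal r < R \<longrightarrow> sphere_integral (\<lambda>\<theta>. f (r *\<^sub>R \<theta>)) = 0)"

definition zero_bdry :: "ereal \<Rightarrow> ('a::euclidean_space \<Rightarrow> real) \<Rightarrow> bool" where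
  "zero_bdry R f \<longleftrightarrow> (\<forall>y. ereal (norm y) = R \<longrightarrow> (f \<longlongrightarrow> 0) (at y within punct R))"

end

theory Submission
  imports Defs
begin


lemma open_punct: "open (punct R :: 'a::euclidean_space set)"
proof (cases R)
  case (real r)
  have "punct R = ball (0::'a) r - {0}" using real by (auto simp: punct_def)
  then show ?thesis by (simp add: open_Diff)
next
  case PInf
  have "punct R = UNIV - {0::'a}" using PInf by (auto simp: punct_def)
  then show ?thesis by (simp add: open_Diff)
next
  case MInf
  have "punct R = ({}::'a set)" using MInf by (auto simp: punct_def)
  then show ?thesis by simp
qed

lemma grad_inner:
  assumes "f differentiable at z"
  shows "frechet_derivative f (at z) v = v \<bullet> grad f z"
proof -
  have lin: "linear (frechet_derivative f (at z))" using assms by (rule linear_frechet_derivative)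
  have "frechet_derivative f (at z) v = frechet_derivative f (at z) (\<Sum>i\<in>Basis. (v \<bullet> i) *\<^sub>R i)"
    by (simp add: euclidean_representation)
  also have "\<dots> = (\<Sum>i\<in>Basis. (v \<bullet> i) * frechet_derivative f (at z) i)"
    using lin by (simp add: linear_sum linear_scale)
  also have "\<dots> = v \<bullet> grad f z"
    by (simp add: grad_def pderiv_def inner_sum_right mult.commute)
  finally show ?thesis .
qed

lemma basis_grad: "i \<in> Basis \<Longrightarrow> i \<bullet> grad f z = pderiv f i z"
  by (simp add: grad_def inner_sum_right inner_Basis if_distrib sum.delta cong: if_cong)

lemma line_deriv1:
  assumes "f differentiable at (y + s *\<^sub>R v)"
  shows "((\<lambda>s. f (y + s *\<^sub>R v)) has_real_derivative (v \<bullet> grad f (y + s *\<^sub>R v))) (at s)"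
proof -
  have d: "(f has_derivative frechet_derivative f (at (y + s *\<^sub>R v))) (at (y + s *\<^sub>R v))"
    using assms frechet_derivative_works by blast
  have l: "((\<lambda>s. y + s *\<^sub>R v) has_derivative (\<lambda>h. h *\<^sub>R v)) (at s)"
    by (auto intro!: derivative_eq_intros)
  have "((\<lambda>s. f (y + s *\<^sub>R v)) has_derivative (\<lambda>h. frechet_derivative f (at (y + s *\<^sub>R v)) (h *\<^sub>R v))) (at s)"
    using has_derivative_compose[OF l d] by simp
  moreover have "(\<lambda>h. frechet_derivative f (at (y + s *\<^sub>R v)) (h *\<^sub>R v)) = (\<lambda>h. h * (v \<bullet> grad f (y + s *\<^sub>R v)))"
    using linear_frechet_derivative[OF assms] grad_inner[OF assms]
    by (auto simp: linear_scale)
  moreover have "(\<lambda>h. h * (v \<bullet> grad f (y + s *\<^sub>R v))) = (*) (v \<bullet> grad f (y + s *\<^sub>R v))"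
    by (rule ext) (simp add: mult.commute)
  ultimately show ?thesis by (simp add: has_field_derivative_def)
qed

definition hess :: "('a::euclidean_space \<Rightarrow> real) \<Rightarrow> 'a \<Rightarrow> 'a \<Rightarrow> real" where
  "hess f y v = (\<Sum>i\<in>Basis. (v \<bullet> i) * (v \<bullet> grad (pderiv f i) y))"

lemma line_deriv2:
  assumes "\<forall>j\<in>Basis. pderiv f j differentiable at y"
  shows "((\<lambda>s. v \<bullet> grad f (y + s *\<^sub>R v)) has_real_derivative hess f y v) (at 0)"
proof -
  have e: "(\<lambda>s. v \<bullet> grad f (y + s *\<^sub>R v)) = (\<lambda>s. \<Sum>i\<in>Basis. (v \<bullet> i) * pderiv f i (y + s *\<^sub>R v))"
    by (simp add: grad_def inner_sum_right mult.commute)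
  have "((\<lambda>s. \<Sum>i\<in>Basis. (v \<bullet> i) * pderiv f i (y + s *\<^sub>R v)) has_real_derivative
        (\<Sum>i\<in>Basis. (v \<bullet> i) * (v \<bullet> grad (pderiv f i) y))) (at 0)"
  proof (rule DERIV_sum, rule DERIV_cmult)
    fix i :: 'a assume "i \<in> Basis"
    then have "pderiv f i differentiable at (y + 0 *\<^sub>R v)" using assms by simp
    from line_deriv1[OF this] show "((\<lambda>s. pderiv f i (y + s *\<^sub>R v)) has_real_derivative v \<bullet> grad (pderiv f i) y) (at 0)"
      by simp
  qed
  then show ?thesis unfolding e hess_def .
qed

lemma hess_alt: "hess f y v = (\<Sum>j\<in>Basis. \<Sum>k\<in>Basis. (v \<bullet> j) * (v \<bullet> k) * pderiv (pderiv f j) k y)"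
  unfolding hess_def grad_def inner_sum_right sum_distrib_left
  by (intro sum.cong refl) (simp add: ac_simps)

lemma basis_sum: "i \<in> Basis \<Longrightarrow> (\<Sum>j\<in>Basis. (i \<bullet> j) * g j) = (g i :: real)"
proof -
  assume i: "i \<in> Basis"
  have "(\<Sum>j\<in>Basis. (i \<bullet> j) * g j) = (\<Sum>j\<in>Basis. if j = i then g j else 0)"
    using i by (intro sum.cong refl) (auto simp: inner_Basis)
  then show ?thesis using i by simp
qed

lemma basis_sum': "i \<in> Basis \<Longrightarrow> (\<Sum>j\<in>Basis. (j \<bullet> i) * g j) = (g i :: real)"
  using basis_sum[of i g] by (simp add: inner_commute)

lemma hess_sum: "(\<Sum>i\<in>Basis. hess f y i) = laplacian f y"
  unfolding hess_alt laplacian_def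
proof (intro sum.cong refl)
  fix x :: 'a assume x: "x \<in> Basis"
  have "(\<Sum>j\<in>Basis. \<Sum>k\<in>Basis. x \<bullet> j * (x \<bullet> k) * pderiv (pderiv f j) k y)
     = (\<Sum>j\<in>Basis. x \<bullet> j * (\<Sum>k\<in>Basis. x \<bullet> k * pderiv (pderiv f j) k y))"
    by (simp add: sum_distrib_left mult.assoc)
  also have "\<dots> = (\<Sum>k\<in>Basis. x \<bullet> k * pderiv (pderiv f x) k y)"
    using basis_sum[OF x, of "\<lambda>j. \<Sum>k\<in>Basis. x \<bullet> k * pderiv (pderiv f j) k y"] .
  also have "\<dots> = pderiv (pderiv f x) x y" using basis_sum[OF x] .
  finally show "(\<Sum>j\<in>Basis. \<Sum>k\<in>Basis. x \<bullet> j * (x \<bullet> k) * pderiv (pderiv f j) k y) = pderiv (pderiv f x) x y" .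
qed

definition rfl :: "'a::euclidean_space \<Rightarrow> 'a \<Rightarrow> 'a" where
  "rfl e x = x - (2 * (x \<bullet> e)) *\<^sub>R e"

lemma refl_inner: "norm e = 1 \<Longrightarrow> rfl e x \<bullet> y = x \<bullet> rfl e y"
  by (simp add: rfl_def inner_diff_left inner_diff_right inner_commute)

lemma refl_refl: "norm e = 1 \<Longrightarrow> rfl e (rfl e x) = x"
proof -
  assume "norm e = 1"
  then have "e \<bullet> e = 1" by (simp add: power2_norm_eq_inner[symmetric])
  then show ?thesis by (simp add: rfl_def inner_diff_left algebra_simps)
qed

lemma refl_inner2: "norm e = 1 \<Longrightarrow> rfl e x \<bullet> rfl e y = x \<bullet> y"
  by (simp add: refl_inner refl_refl)

lemma refl_norm: "norm e = 1 \<Longrightarrow> norm (rfl e x) = norm x"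
  by (simp add: norm_eq_sqrt_inner refl_inner2)

lemma refl_lin: "rfl e (x + s *\<^sub>R v) = rfl e x + s *\<^sub>R rfl e v"
  by (simp add: rfl_def inner_add_left algebra_simps)

lemma refl_dist: "norm e = 1 \<Longrightarrow> dist (rfl e x) (rfl e y) = dist x y"
proof -
  assume e: "norm e = 1"
  have "rfl e x - rfl e y = rfl e (x - y)" by (simp add: rfl_def inner_diff_left algebra_simps)
  then show ?thesis using refl_norm[OF e] by (simp add: dist_norm)
qed

lemma refl_swap: "norm e = 1 \<Longrightarrow> rfl e i \<bullet> j = rfl e j \<bullet> i"
proof -
  assume e: "norm e = 1"
  have "rfl e i \<bullet> j = i \<bullet> rfl e j" by (rule refl_inner[OF e])
  also have "\<dots> = rfl e j \<bullet> i" by (rule inner_commute)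
  finally show ?thesis .
qed

lemma hess_sum_refl:
  assumes "norm e = 1"
  shows "(\<Sum>i\<in>Basis. hess f y (rfl e i)) = laplacian f y"
proof -
  have key: "(\<Sum>i\<in>Basis. (rfl e i \<bullet> j) * (rfl e i \<bullet> k)) = j \<bullet> k" for j k :: 'a
  proof -
    have "(\<Sum>i\<in>Basis. (rfl e i \<bullet> j) * (rfl e i \<bullet> k)) = (\<Sum>i\<in>Basis. (rfl e j \<bullet> i) * (rfl e k \<bullet> i))"
      by (rule sum.cong[OF refl], rule arg_cong2[where f="(*)"], rule refl_swap[OF assms], rule refl_swap[OF assms])
    also have "\<dots> = rfl e j \<bullet> rfl e k" by (rule euclidean_inner[symmetric])
    also have "\<dots> = j \<bullet> k" using refl_inner2[OF assms] .
    finally show ?thesis .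
  qed
  have "(\<Sum>i\<in>Basis. hess f y (rfl e i)) = (\<Sum>i\<in>Basis. \<Sum>j\<in>Basis. \<Sum>k\<in>Basis. (rfl e i \<bullet> j) * (rfl e i \<bullet> k) * pderiv (pderiv f j) k y)"
    unfolding hess_alt ..
  also have "\<dots> = (\<Sum>j\<in>Basis. \<Sum>i\<in>Basis. \<Sum>k\<in>Basis. (rfl e i \<bullet> j) * (rfl e i \<bullet> k) * pderiv (pderiv f j) k y)"
    by (rule sum.swap)
  also have "\<dots> = (\<Sum>j\<in>Basis. \<Sum>k\<in>Basis. \<Sum>i\<in>Basis. (rfl e i \<bullet> j) * (rfl e i \<bullet> k) * pderiv (pderiv f j) k y)"
    by (rule sum.cong[OF refl]) (rule sum.swap)
  also have "\<dots> = (\<Sum>j\<in>Basis. \<Sum>k\<in>Basis. (\<Sum>i\<in>Basis. (rfl e i \<bullet> j) * (rfl e i \<bullet> k)) * pderiv (pderiv f j) k y)"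
    by (simp only: sum_distrib_right)
  also have "\<dots> = (\<Sum>j\<in>Basis. \<Sum>k\<in>Basis. (j \<bullet> k) * pderiv (pderiv f j) k y)" by (simp only: key)
  also have "\<dots> = laplacian f y"
    unfolding laplacian_def by (intro sum.cong refl) (simp add: basis_sum)
  finally show ?thesis .
qed



lemma second_test:
  fixes g g' :: "real \<Rightarrow> real"
  assumes d: "\<delta> > 0" and mx: "\<And>s. \<bar>s\<bar> < \<delta> \<Longrightarrow> g s \<le> g 0"
    and dg: "\<And>s. \<bar>s\<bar> < \<delta> \<Longrightarrow> (g has_real_derivative g' s) (at s)"
    and dg': "(g' has_real_derivative L) (at 0)"
  shows "g' 0 = 0 \<and> L \<le> 0"
proof -
  have g0: "g' 0 = 0"
    by (rule DERIV_local_max[OF dg[of 0] d]) (use d mx in auto)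
  have "L \<le> 0"
  proof (rule ccontr)
    assume "\<not> L \<le> 0"
    then have "0 < L" by simp
    from DERIV_pos_inc_right[OF dg' this] obtain d1 where d1: "d1 > 0" "\<And>h. h > 0 \<Longrightarrow> h < d1 \<Longrightarrow> g' 0 < g' (0 + h)"
      by blast
    define s where "s = min d1 \<delta> / 2"
    have s: "0 < s" "s < d1" "s < \<delta>" using d d1 by (auto simp: s_def)
    have "\<exists>z>0. z < s \<and> g s - g 0 = (s - 0) * g' z"
      by (rule MVT2) (use s dg in auto)
    then obtain z where z: "0 < z" "z < s" "g s - g 0 = s * g' z" by auto
    have "g' z > 0" using d1(2)[of z] z s g0 by auto
    then have "g s > g 0" using z s by (simp add: algebra_simps)
    moreover have "g s \<le> g 0" using mx[of s] s by auto
    ultimately show False by simp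
  qed
  with g0 show ?thesis by simp
qed

definition Phi :: "real \<Rightarrow> 'a::euclidean_space \<Rightarrow> real \<Rightarrow> 'a \<Rightarrow> real" where
  "Phi k e m x = (k + x \<bullet> e) * (x \<bullet> x) powr m"

definition dPhi :: "real \<Rightarrow> 'a::euclidean_space \<Rightarrow> real \<Rightarrow> 'a \<Rightarrow> 'a \<Rightarrow> real" where
  "dPhi k e m z v = (v \<bullet> e) * (z \<bullet> z) powr m + (k + z \<bullet> e) * (m * (z \<bullet> z) powr (m - 1) * (2 * (z \<bullet> v)))"

definition d2Phi :: "real \<Rightarrow> 'a::euclidean_space \<Rightarrow> real \<Rightarrow> 'a \<Rightarrow> 'a \<Rightarrow> real" where
  "d2Phi k e m y v = 2 * ((v \<bullet> e) * (m * (y \<bullet> y) powr (m - 1) * (2 * (y \<bullet> v))))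
     + (k + y \<bullet> e) * (m * ((m - 1) * (y \<bullet> y) powr (m - 2) * (2 * (y \<bullet> v))) * (2 * (y \<bullet> v))
         + m * (y \<bullet> y) powr (m - 1) * (2 * (v \<bullet> v)))"

lemma Phi_line: "Phi k e m (y + s *\<^sub>R v) =
   (k + y \<bullet> e + s * (v \<bullet> e)) * (y \<bullet> y + 2 * s * (y \<bullet> v) + s\<^sup>2 * (v \<bullet> v)) powr m"
  by (simp add: Phi_def inner_add_left inner_add_right inner_commute power2_eq_square algebra_simps)

lemma dPhi_line: "dPhi k e m (y + s *\<^sub>R v) v =
   (v \<bullet> e) * (y \<bullet> y + 2 * s * (y \<bullet> v) + s\<^sup>2 * (v \<bullet> v)) powr m
   + (k + y \<bullet> e + s * (v \<bullet> e)) * (m * (y \<bullet> y + 2 * s * (y \<bullet> v) + s\<^sup>2 * (v \<bullet> v)) powr (m - 1)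
        * (2 * (y \<bullet> v) + 2 * s * (v \<bullet> v)))"
  by (simp add: dPhi_def inner_add_left inner_add_right inner_commute power2_eq_square algebra_simps)

lemma Phi_d1:
  assumes "y + s *\<^sub>R v \<noteq> 0"
  shows "((\<lambda>s. Phi k e m (y + s *\<^sub>R v)) has_real_derivative dPhi k e m (y + s *\<^sub>R v) v) (at s)"
proof -
  have pos: "0 < y \<bullet> y + 2 * s * (y \<bullet> v) + s\<^sup>2 * (v \<bullet> v)"
  proof -
    have "(y + s *\<^sub>R v) \<bullet> (y + s *\<^sub>R v) > 0" using assms by simp
    then show ?thesis by (simp add: inner_add_left inner_add_right inner_commute power2_eq_square algebra_simps)
  qed
  show ?thesis unfolding Phi_line dPhi_line
    by (rule derivative_eq_intros refl | use pos in simp)+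
qed

lemma Phi_d2:
  assumes "y \<noteq> 0"
  shows "((\<lambda>s. dPhi k e m (y + s *\<^sub>R v) v) has_real_derivative d2Phi k e m y v) (at 0)"
proof -
  define Q where "Q = (\<lambda>s::real. y \<bullet> y + 2 * s * (y \<bullet> v) + s\<^sup>2 * (v \<bullet> v))"
  define A where "A = (\<lambda>s::real. k + y \<bullet> e + s * (v \<bullet> e))"
  define Q' where "Q' = (\<lambda>s::real. 2 * (y \<bullet> v) + 2 * s * (v \<bullet> v))"
  have pos: "0 < Q 0" using assms by (simp add: Q_def)
  have Q0: "Q 0 = y \<bullet> y" by (simp add: Q_def)
  have dQ: "(Q has_real_derivative 2 * (y \<bullet> v)) (at 0)"
    unfolding Q_def by (rule derivative_eq_intros refl | simp)+
  have dQm: "((\<lambda>s. Q s powr m) has_real_derivative m * Q 0 powr (m - 1) * (2 * (y \<bullet> v))) (at 0)"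
    using DERIV_fun_powr[OF dQ pos] by simp
  have dQm1: "((\<lambda>s. Q s powr (m - 1)) has_real_derivative (m - 1) * Q 0 powr (m - 2) * (2 * (y \<bullet> v))) (at 0)"
    using DERIV_fun_powr[OF dQ pos, of "m - 1"] by (simp add: algebra_simps)
  have dA: "(A has_real_derivative v \<bullet> e) (at 0)"
    unfolding A_def by (rule derivative_eq_intros refl | simp)+
  have dQ': "(Q' has_real_derivative 2 * (v \<bullet> v)) (at 0)"
    unfolding Q'_def by (rule derivative_eq_intros refl | simp)+
  have e: "(\<lambda>s. dPhi k e m (y + s *\<^sub>R v) v) = (\<lambda>s. (v \<bullet> e) * Q s powr m + A s * ((m * Q s powr (m - 1)) * Q' s))"
    by (rule ext) (simp add: dPhi_line Q_def A_def Q'_def mult.assoc)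
  have "((\<lambda>s. (v \<bullet> e) * Q s powr m + A s * ((m * Q s powr (m - 1)) * Q' s)) has_real_derivative
     (v \<bullet> e) * (m * Q 0 powr (m - 1) * (2 * (y \<bullet> v)))
     + ((v \<bullet> e) * ((m * Q 0 powr (m - 1)) * Q' 0) + ((m * ((m - 1) * Q 0 powr (m - 2) * (2 * (y \<bullet> v)))) * Q' 0 + (2 * (v \<bullet> v)) * (m * Q 0 powr (m - 1))) * A 0)) (at 0)"
    by (rule DERIV_add, rule DERIV_cmult, rule dQm, rule DERIV_mult, rule dA, rule DERIV_mult, rule DERIV_cmult, rule dQm1, rule dQ')
  moreover have "(v \<bullet> e) * (m * Q 0 powr (m - 1) * (2 * (y \<bullet> v)))
     + ((v \<bullet> e) * ((m * Q 0 powr (m - 1)) * Q' 0) + ((m * ((m - 1) * Q 0 powr (m - 2) * (2 * (y \<bullet> v)))) * Q' 0 + (2 * (v \<bullet> v)) * (m * Q 0 powr (m - 1))) * A 0)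
     = d2Phi k e m y v"
    unfolding d2Phi_def Q0 by (simp add: A_def Q'_def algebra_simps)
  ultimately show ?thesis unfolding e by simp
qed



lemma bdry_metric:
  assumes "zero_bdry R \<phi>" "ereal (norm z) = R" "\<eta> > 0"
  shows "\<exists>d>0. \<forall>x\<in>punct R. x \<noteq> z \<and> dist x z < d \<longrightarrow> \<bar>\<phi> x\<bar> < \<eta>"
proof -
  have "(\<phi> \<longlongrightarrow> 0) (at z within punct R)" using assms unfolding zero_bdry_def by blast
  then have "eventually (\<lambda>x. dist (\<phi> x) 0 < \<eta>) (at z within punct R)"
    using assms(3) tendsto_iff by blast
  then show ?thesis unfolding eventually_at by auto
qed

lemma closed_le_R: "closed {x::'a::euclidean_space. ereal (norm x) \<le> R}"
proof -
  have "continuous_on UNIV (\<lambda>x::'a. ereal (norm x))"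
    by (intro continuous_on_ereal continuous_intros)
  then show ?thesis by (rule closed_Collect_le) (rule continuous_on_const)
qed

lemma exists_max:
  fixes u :: "'a::euclidean_space \<Rightarrow> real"
  assumes D: "open D" "D \<subseteq> punct R" and cu: "continuous_on D u"
   and x1: "x1 \<in> D" and eta: "\<eta> = u x1" "\<eta> > 0"
   and T: "closed T" "bounded T" "{x\<in>D. u x \<ge> \<eta>} \<subseteq> T"
   and TD: "\<And>z. z \<in> T \<Longrightarrow> ereal (norm z) < R \<Longrightarrow> z \<in> D"
   and bd: "\<And>z. ereal (norm z) = R \<Longrightarrow> \<exists>d>0. \<forall>x\<in>D. dist x z < d \<longrightarrow> u x < \<eta>"
  shows "\<exists>x0\<in>D. \<forall>x\<in>D. u x \<le> u x0"
proof -
  define S where "S = {x\<in>D. u x \<ge> \<eta>}"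
  have "closedin (top_of_set D) (D \<inter> u -` {\<eta>..})"
    by (rule continuous_closedin_preimage[OF cu]) simp
  moreover have "D \<inter> u -` {\<eta>..} = S" by (auto simp: S_def)
  ultimately obtain T' where T': "closed T'" "S = D \<inter> T'" by (auto simp: closedin_closed)
  have cl: "closure S \<subseteq> S"
  proof
    fix z assume z: "z \<in> closure S"
    have zT: "z \<in> T" using closure_minimal[OF T(3)[folded S_def] T(1)] z by auto
    have zT': "z \<in> T'" using closure_minimal[of S T'] T' z by auto
    have "S \<subseteq> {x. ereal (norm x) \<le> R}" using D(2) by (auto simp: S_def punct_def)
    then have zR: "ereal (norm z) \<le> R" using closure_minimal[OF _ closed_le_R] z by blast
    show "z \<in> S"
    proof (cases "ereal (norm z) < R")
      case True
      then have "z \<in> D" by (rule TD[OF zT])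
      then show ?thesis using zT' T' by auto
    next
      case False
      then have "ereal (norm z) = R" using zR by auto
      from bd[OF this] obtain d where d: "d > 0" "\<forall>x\<in>D. dist x z < d \<longrightarrow> u x < \<eta>" by blast
      from z d(1) obtain x where "x \<in> S" "dist x z < d" by (auto simp: closure_approachable)
      with d(2) show ?thesis by (auto simp: S_def)
    qed
  qed
  have "closed S" using cl closure_subset[of S] closure_closed by (metis closed_closure subset_antisym)
  moreover have "bounded S" using T(2,3) by (auto simp: S_def intro: bounded_subset)
  ultimately have "compact S" by (simp add: compact_eq_bounded_closed)
  moreover have "S \<noteq> {}" using x1 eta by (auto simp: S_def)
  moreover have "continuous_on S u" using cu by (rule continuous_on_subset) (auto simp: S_def)
  ultimately obtain x0 where x0: "x0 \<in> S" "\<forall>y\<in>S. u y \<le> u x0"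
    using continuous_attains_sup by blast
  show ?thesis
  proof (intro bexI ballI)
    show "x0 \<in> D" using x0 by (auto simp: S_def)
    fix x assume "x \<in> D"
    show "u x \<le> u x0"
    proof (cases "u x \<ge> \<eta>")
      case True then show ?thesis using x0 \<open>x \<in> D\<close> by (auto simp: S_def)
    next
      case False then show ?thesis using x0 by (auto simp: S_def)
    qed
  qed
qed

lemma local_line:
  fixes u :: "'a::euclidean_space \<Rightarrow> real"
  assumes "open D" "x0 \<in> D" "\<forall>x\<in>D. u x \<le> u x0"
    and dg: "\<And>s. x0 + s *\<^sub>R v \<in> D \<Longrightarrow> ((\<lambda>s. u (x0 + s *\<^sub>R v)) has_real_derivative g' s) (at s)"
    and dg': "(g' has_real_derivative L) (at 0)"
  shows "g' 0 = 0 \<and> L \<le> 0"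
proof -
  obtain r where r: "r > 0" "ball x0 r \<subseteq> D" using assms(1,2) open_contains_ball by blast
  define \<delta> where "\<delta> = r / (norm v + 1)"
  have nv: "norm v + 1 > 0" using norm_ge_zero[of v] by linarith
  have dpos: "\<delta> > 0" using r nv by (simp add: \<delta>_def)
  have inD: "x0 + s *\<^sub>R v \<in> D" if "\<bar>s\<bar> < \<delta>" for s
  proof -
    have "norm (s *\<^sub>R v) = \<bar>s\<bar> * norm v" by simp
    also have "\<dots> \<le> \<bar>s\<bar> * (norm v + 1)" by (simp add: mult_left_mono)
    also have "\<dots> < \<delta> * (norm v + 1)" using that nv by (intro mult_strict_right_mono) auto
    also have "\<dots> = r" using nv by (simp add: \<delta>_def)
    finally have "dist x0 (x0 + s *\<^sub>R v) < r" by (simp add: dist_norm)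
    then show ?thesis using r by auto
  qed
  show ?thesis
  proof (rule second_test[OF dpos])
    fix s :: real assume "\<bar>s\<bar> < \<delta>"
    then show "u (x0 + s *\<^sub>R v) \<le> u (x0 + 0 *\<^sub>R v)" using inD assms(3) by auto
  next
    fix s :: real assume "\<bar>s\<bar> < \<delta>"
    then show "((\<lambda>s. u (x0 + s *\<^sub>R v)) has_real_derivative g' s) (at s)" using inD dg by auto
  next
    show "(g' has_real_derivative L) (at 0)" by (rule dg')
  qed
qed



lemma sq_powr: "x \<noteq> 0 \<Longrightarrow> (x \<bullet> x) powr m = norm x powr (2 * m)"
proof -
  assume "x \<noteq> 0"
  then have n: "norm x > 0" by simp
  have "norm x powr (2 * m) = (norm x powr 2) powr m" by (simp only: powr_powr)
  also have "norm x powr 2 = x \<bullet> x" using n by (simp add: powr_numeral power2_norm_eq_inner)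
  finally show ?thesis by simp
qed

lemma H1:
  fixes r \<eta> C \<sigma> :: real
  assumes "0 < r" "0 < \<eta>" "0 < \<sigma>" "\<eta> \<le> C * r powr (-\<sigma>)"
  shows "r \<le> (C / \<eta>) powr (1 / \<sigma>)"
proof -
  have "\<eta> * r powr \<sigma> \<le> C * r powr (-\<sigma>) * r powr \<sigma>"
    using assms by (intro mult_right_mono) auto
  also have "\<dots> = C" using assms(1) by (simp add: mult.assoc powr_add[symmetric])
  finally have "r powr \<sigma> \<le> C / \<eta>" using assms(2) by (simp add: field_simps)
  then have "(r powr \<sigma>) powr (1 / \<sigma>) \<le> (C / \<eta>) powr (1 / \<sigma>)"
    using assms by (intro powr_mono2) auto
  then show ?thesis using assms by (simp add: powr_powr)
qed

lemma H2:
  fixes r \<epsilon> C s a :: real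
  assumes "0 < r" "0 < \<epsilon>" "0 < C" "s < a" "\<epsilon> * r powr (-a) \<le> C * r powr (-s)"
  shows "(\<epsilon> / C) powr (1 / (a - s)) \<le> r"
proof -
  have "\<epsilon> * r powr (-a) * r powr a \<le> C * r powr (-s) * r powr a"
    using assms by (intro mult_right_mono) auto
  then have "\<epsilon> \<le> C * r powr (a - s)" using assms(1)
    by (simp add: mult.assoc powr_add[symmetric])
  then have "\<epsilon> / C \<le> r powr (a - s)" using assms(3) by (simp add: field_simps)
  then have "(\<epsilon> / C) powr (1 / (a - s)) \<le> (r powr (a - s)) powr (1 / (a - s))"
    using assms by (intro powr_mono2) auto
  then show ?thesis using assms by (simp add: powr_powr)
qed

lemma inX_bounds:
  fixes \<phi> :: "'a::euclidean_space \<Rightarrow> real"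
  assumes "inX \<sigma> R \<phi>"
  shows "\<exists>C\<ge>0. \<forall>x\<in>punct R. \<bar>\<phi> x\<bar> \<le> C * norm x powr (-\<sigma>) \<and> norm (grad \<phi> x) \<le> C * norm x powr (-\<sigma>-1)"
proof -
  obtain C where C: "\<forall>x\<in>punct R. norm x powr \<sigma> * \<bar>\<phi> x\<bar> + norm x powr (\<sigma> + 1) * norm (grad \<phi> x) \<le> C"
    using assms unfolding inX_def by blast
  show ?thesis
  proof (intro exI[of _ "max C 0"] conjI ballI)
    fix x :: 'a assume x: "x \<in> punct R"
    then have nx: "norm x > 0" by (simp add: punct_def)
    have t1: "norm x powr \<sigma> * \<bar>\<phi> x\<bar> \<le> max C 0" using C x nx
      by (smt (verit) mult_nonneg_nonneg norm_ge_zero powr_ge_zero)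
    have t2: "norm x powr (\<sigma> + 1) * norm (grad \<phi> x) \<le> max C 0" using C x nx
      by (smt (verit) mult_nonneg_nonneg norm_ge_zero powr_ge_zero abs_ge_zero)
    have "\<bar>\<phi> x\<bar> = norm x powr (-\<sigma>) * (norm x powr \<sigma> * \<bar>\<phi> x\<bar>)"
      using nx by (simp add: mult.assoc[symmetric] powr_add[symmetric])
    also have "\<dots> \<le> norm x powr (-\<sigma>) * max C 0" using t1 by (intro mult_left_mono) auto
    finally show "\<bar>\<phi> x\<bar> \<le> max C 0 * norm x powr (-\<sigma>)" by (simp add: mult.commute)
    have "norm (grad \<phi> x) = norm x powr (-\<sigma>-1) * (norm x powr (\<sigma> + 1) * norm (grad \<phi> x))"
      using nx by (simp add: mult.assoc[symmetric] powr_add[symmetric])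
    also have "\<dots> \<le> norm x powr (-\<sigma>-1) * max C 0" using t2 by (intro mult_left_mono) auto
    finally show "norm (grad \<phi> x) \<le> max C 0 * norm x powr (-\<sigma>-1)" by (simp add: mult.commute)
  qed simp
qed

lemma Lcoef_bounds:
  assumes "0 \<le> t" "0 < \<beta>" "0 < p"
  shows "0 \<le> Lcoef p \<xi> \<beta> t x \<and> Lcoef p \<xi> \<beta> t x \<le> p / \<beta>"
proof (cases t)
  case (real s)
  then have s: "0 \<le> s" using assms by simp
  have "\<beta> \<le> s * norm x powr (\<xi> - 1) + \<beta>" using s by simp
  then show ?thesis using real assms
    by (simp add: Lcoef_def frac_le)
next
  case PInf then show ?thesis using assms by (simp add: Lcoef_def)
next
  case MInf then show ?thesis using assms by simp
qed

lemma Lcoef_norm: "norm x = norm y \<Longrightarrow> Lcoef p \<xi> \<beta> t x = Lcoef p \<xi> \<beta> t y"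
  by (cases t) (simp_all add: Lcoef_def)

lemma sum_d2Phi:
  fixes y e :: "'a::euclidean_space"
  assumes "y \<noteq> 0"
  shows "(\<Sum>i\<in>Basis. d2Phi k e m y i) = (y \<bullet> y) powr (m - 1) * (4 * m * (y \<bullet> e) + (k + y \<bullet> e) * (4 * m * (m - 1) + 2 * m * real DIM('a)))"
proof -
  define q where "q = y \<bullet> y"
  have q: "q > 0" using assms by (simp add: q_def)
  have s1: "(\<Sum>i\<in>Basis. (i \<bullet> e) * (y \<bullet> i)) = y \<bullet> e"
  proof -
    have "y \<bullet> e = (\<Sum>i\<in>Basis. (y \<bullet> i) * (e \<bullet> i))" by (rule euclidean_inner)
    also have "\<dots> = (\<Sum>i\<in>Basis. (i \<bullet> e) * (y \<bullet> i))"
      by (intro sum.cong refl) (simp add: inner_commute)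
    finally show ?thesis by simp
  qed
  have s2: "(\<Sum>i\<in>Basis. (y \<bullet> i) * (y \<bullet> i)) = q"
    by (simp add: euclidean_inner[of y y] q_def)
  have s3: "(\<Sum>i\<in>(Basis::'a set). i \<bullet> i) = real DIM('a)"
    by simp
  have qq: "q powr (m - 2) = q powr (m - 1) / q"
  proof -
    have "q powr (m - 2) = q powr ((m - 1) - 1)" by simp
    also have "\<dots> = q powr (m - 1) / q" using q by (simp only: powr_diff powr_one)
    finally show ?thesis .
  qed
  have pt: "d2Phi k e m y i = (4 * m * q powr (m - 1)) * ((i \<bullet> e) * (y \<bullet> i))
      + ((k + y \<bullet> e) * (4 * m * (m - 1) * q powr (m - 2))) * ((y \<bullet> i) * (y \<bullet> i))
      + ((k + y \<bullet> e) * (2 * m * q powr (m - 1))) * (i \<bullet> i)" for i :: 'a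
    unfolding d2Phi_def q_def[symmetric] by (simp add: algebra_simps)
  have "(\<Sum>i\<in>Basis. d2Phi k e m y i) =
      (4 * m * q powr (m - 1)) * (\<Sum>i\<in>Basis. (i \<bullet> e) * (y \<bullet> i))
      + ((k + y \<bullet> e) * (4 * m * (m - 1) * q powr (m - 2))) * (\<Sum>i\<in>Basis. (y \<bullet> i) * (y \<bullet> i))
      + ((k + y \<bullet> e) * (2 * m * q powr (m - 1))) * (\<Sum>i\<in>(Basis::'a set). (i \<bullet> i))"
    unfolding pt by (simp add: sum.distrib sum_distrib_left)
  also have "\<dots> = q powr (m - 1) * (4 * m * (y \<bullet> e) + (k + y \<bullet> e) * (4 * m * (m - 1) + 2 * m * real DIM('a)))"
    unfolding s1 s2 s3 qq using q by (simp add: field_simps)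
  finally show ?thesis by (simp add: q_def)
qed

lemma dPhi_self:
  assumes "y \<noteq> 0"
  shows "dPhi k e m y y = (y \<bullet> y) powr m * (y \<bullet> e + (k + y \<bullet> e) * (2 * m))"
proof -
  have q: "y \<bullet> y > 0" using assms by simp
  have h: "(y \<bullet> y) powr (m - 1) = (y \<bullet> y) powr m / (y \<bullet> y)"
    using q by (simp add: powr_diff)
  show ?thesis unfolding dPhi_def h using q by (simp add: field_simps)
qed



lemma C2_diff:
  assumes "C2_on U \<phi>" "x \<in> U"
  shows "\<phi> differentiable at x" "\<forall>i\<in>Basis. pderiv \<phi> i differentiable at x"
  using assms by (auto simp: C2_on_def)

lemma isCont_Phi: "x \<noteq> 0 \<Longrightarrow> isCont (Phi k e m) x"
  unfolding Phi_def by (intro continuous_intros) auto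

lemma partb:
  fixes \<phi> :: "'a::euclidean_space \<Rightarrow> real" and sg :: real
  assumes \<sigma>pos: "\<sigma> > 0" and \<sigma>N: "\<sigma> < real DIM('a) - 2"
   and cnn: "\<And>x::'a. 0 \<le> Lcoef p \<xi> \<beta> t x"
   and C2: "C2_on (punct R) \<phi>" and X: "inX \<sigma> R \<phi>"
   and eq: "\<forall>x\<in>punct R. Lminus p \<xi> \<beta> t \<phi> x = 0"
   and bd: "R \<noteq> \<infinity> \<longrightarrow> zero_bdry R \<phi>"
   and sg: "\<bar>sg\<bar> = 1"
  shows "\<forall>x\<in>punct R. sg * \<phi> x \<le> 0"
proof (rule ccontr)
  assume "\<not> ?thesis"
  then obtain x1 where x1: "x1 \<in> punct R" "sg * \<phi> x1 > 0" by (auto simp: not_le)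
  obtain C where C: "C \<ge> 0" "\<forall>x\<in>punct R. \<bar>\<phi> x\<bar> \<le> C * norm x powr (-\<sigma>) \<and> norm (grad \<phi> x) \<le> C * norm x powr (-\<sigma>-1)"
    using inX_bounds[OF X] by blast
  define N where "N = real DIM('a)"
  define a where "a = (\<sigma> + N - 2) / 2"
  have a: "\<sigma> < a" "a < N - 2" using \<sigma>N by (auto simp: a_def N_def)
  have apos: "a > 0" using a \<sigma>pos by simp
  define m where "m = - a / 2"
  define \<Phi> where "\<Phi> = Phi 1 (0::'a) m"
  have \<Phi>n: "\<Phi> x = norm x powr (-a)" if "x \<noteq> 0" for x
    using sq_powr[OF that, of m] by (simp add: \<Phi>_def Phi_def m_def)
  have \<Phi>pos: "\<Phi> x > 0" if "x \<noteq> 0" for x using \<Phi>n[OF that] that by simp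
  have pR: "x \<noteq> 0" if "x \<in> punct R" for x using that by (auto simp: punct_def)
  define \<epsilon> where "\<epsilon> = sg * \<phi> x1 / (2 * \<Phi> x1)"
  have \<epsilon>pos: "\<epsilon> > 0" using x1 \<Phi>pos[OF pR[OF x1(1)]] by (simp add: \<epsilon>_def)
  define u where "u x = sg * \<phi> x - \<epsilon> * \<Phi> x" for x
  define \<eta> where "\<eta> = u x1"
  have \<eta>: "\<eta> > 0" using \<Phi>pos[OF pR[OF x1(1)]] x1 by (auto simp: \<eta>_def u_def \<epsilon>_def)
  have sg\<phi>: "sg * \<phi> x \<le> \<bar>\<phi> x\<bar>" for x
  proof -
    have "sg * \<phi> x \<le> \<bar>sg * \<phi> x\<bar>" by simp
    also have "\<dots> = \<bar>\<phi> x\<bar>" using sg by (simp add: abs_mult)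
    finally show ?thesis .
  qed
  have Cpos: "C > 0"
  proof -
    have "0 < \<bar>\<phi> x1\<bar>" using x1 by auto
    also have "\<dots> \<le> C * norm x1 powr (-\<sigma>)" using C x1 by auto
    finally show ?thesis using C(1) by (auto simp: zero_less_mult_iff)
  qed
  define r0 where "r0 = (\<epsilon> / C) powr (1 / (a - \<sigma>))"
  define M where "M = (C / \<eta>) powr (1 / \<sigma>)"
  have r0pos: "r0 > 0" using \<epsilon>pos Cpos by (simp add: r0_def)
  have Sbound: "r0 \<le> norm x \<and> norm x \<le> M" if "x \<in> punct R" "u x \<ge> \<eta>" for x
  proof -
    have nx: "norm x > 0" using that pR by simp
    have b1: "\<bar>\<phi> x\<bar> \<le> C * norm x powr (-\<sigma>)" using C that by auto
    have ep: "\<epsilon> * \<Phi> x > 0" using \<epsilon>pos \<Phi>pos pR[OF that(1)] by simp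
    have "\<eta> \<le> C * norm x powr (-\<sigma>)" using that(2) ep sg\<phi>[of x] b1 by (simp add: u_def)
    then have "norm x \<le> M" unfolding M_def by (rule H1[OF nx \<eta> \<sigma>pos])
    moreover have "\<epsilon> * norm x powr (-a) \<le> C * norm x powr (-\<sigma>)"
      using that(2) \<eta> sg\<phi>[of x] b1 \<Phi>n[OF pR[OF that(1)]] by (simp add: u_def)
    then have "r0 \<le> norm x" unfolding r0_def by (rule H2[OF nx \<epsilon>pos Cpos a(1)])
    ultimately show ?thesis by simp
  qed
  define T where "T = {x::'a. r0 \<le> norm x} \<inter> {x. norm x \<le> M}"
  have Tc: "closed T" unfolding T_def
    by (intro closed_Int closed_Collect_le continuous_intros)
  have Tb: "bounded T" unfolding T_def
    by (rule bounded_subset[OF bounded_cball[of 0 M]]) auto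
  have cont: "continuous_on (punct R) u"
  proof (intro continuous_at_imp_continuous_on ballI)
    fix x :: 'a assume x: "x \<in> punct R"
    have "isCont \<phi> x" using C2_diff(1)[OF C2 x] by (rule differentiable_imp_continuous_within)
    moreover have "isCont \<Phi> x" unfolding \<Phi>_def by (rule isCont_Phi[OF pR[OF x]])
    ultimately show "isCont u x" unfolding u_def[abs_def] by (intro continuous_intros) auto
  qed
  have "\<exists>x0\<in>punct R. \<forall>x\<in>punct R. u x \<le> u x0"
  proof (rule exists_max[OF open_punct subset_refl cont x1(1) \<eta>_def \<eta> Tc Tb])
    show "{x \<in> punct R. \<eta> \<le> u x} \<subseteq> T" using Sbound by (auto simp: T_def)
  next
    fix z :: 'a assume "z \<in> T" "ereal (norm z) < R"
    then show "z \<in> punct R" using r0pos by (auto simp: T_def punct_def)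
  next
    fix z :: 'a assume z: "ereal (norm z) = R"
    then have "zero_bdry R \<phi>" using bd by auto
    from bdry_metric[OF this z \<eta>] obtain d where d: "d > 0" "\<forall>x\<in>punct R. x \<noteq> z \<and> dist x z < d \<longrightarrow> \<bar>\<phi> x\<bar> < \<eta>"
      by blast
    show "\<exists>d>0. \<forall>x\<in>punct R. dist x z < d \<longrightarrow> u x < \<eta>"
    proof (intro exI[of _ d] conjI ballI impI)
      fix x assume x: "x \<in> punct R" "dist x z < d"
      have "x \<noteq> z" using x(1) z by (auto simp: punct_def)
      then have "\<bar>\<phi> x\<bar> < \<eta>" using d x by auto
      moreover have "\<epsilon> * \<Phi> x > 0" using \<epsilon>pos \<Phi>pos pR[OF x(1)] by simp
      ultimately show "u x < \<eta>" using sg\<phi>[of x] by (simp add: u_def)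
    qed (rule d(1))
  qed
  then obtain x0 where x0: "x0 \<in> punct R" "\<forall>x\<in>punct R. u x \<le> u x0" by blast
  have nz: "x0 \<noteq> 0" using pR[OF x0(1)] .
  define G' where "G' v s = sg * (v \<bullet> grad \<phi> (x0 + s *\<^sub>R v)) - \<epsilon> * dPhi 1 0 m (x0 + s *\<^sub>R v) v" for v s
  define Lv where "Lv v = sg * hess \<phi> x0 v - \<epsilon> * d2Phi 1 (0::'a) m x0 v" for v
  have line: "G' v 0 = 0 \<and> Lv v \<le> 0" for v
  proof (rule local_line[OF open_punct x0])
    fix s assume s: "x0 + s *\<^sub>R v \<in> punct R"
    have "((\<lambda>s. sg * \<phi> (x0 + s *\<^sub>R v) - \<epsilon> * \<Phi> (x0 + s *\<^sub>R v)) has_real_derivative G' v s) (at s)"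
      unfolding G'_def \<Phi>_def
      by (intro DERIV_diff DERIV_cmult line_deriv1 Phi_d1 C2_diff(1)[OF C2 s] pR[OF s])
    then show "((\<lambda>s. u (x0 + s *\<^sub>R v)) has_real_derivative G' v s) (at s)" by (simp add: u_def)
  next
    show "(G' v has_real_derivative Lv v) (at 0)"
      unfolding G'_def[abs_def] Lv_def
      by (intro DERIV_diff DERIV_cmult line_deriv2 Phi_d2 C2_diff(2)[OF C2 x0(1)] nz)
  qed
  define q where "q = x0 \<bullet> x0"
  have qpos: "q > 0" using nz by (simp add: q_def)
  define P where "P = q powr (m - 1)"
  have Ppos: "P > 0" using qpos by (simp add: P_def)
  have qm: "q powr m = P * q" using qpos by (simp add: P_def powr_diff)
  define c where "c = Lcoef p \<xi> \<beta> t x0"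
  have "(\<Sum>i\<in>Basis. Lv i) \<le> 0" using line by (intro sum_nonpos) auto
  moreover have "(\<Sum>i\<in>Basis. Lv i) = sg * laplacian \<phi> x0 - \<epsilon> * (P * (4 * m * (m - 1) + 2 * m * N))"
    unfolding Lv_def sum_subtractf sum_distrib_left[symmetric] hess_sum sum_d2Phi[OF nz]
    by (simp add: P_def q_def N_def)
  moreover have "sg * (x0 \<bullet> grad \<phi> x0) = \<epsilon> * (q powr m * (2 * m))"
    using line[of x0] dPhi_self[OF nz, of 1 0 m] by (simp add: G'_def q_def)
  moreover have "laplacian \<phi> x0 = - c * (x0 \<bullet> grad \<phi> x0) / q"
  proof -
    have h: "- laplacian \<phi> x0 - c * ((x0 \<bullet> grad \<phi> x0) / q) = 0"
      using eq x0(1) unfolding Lminus_def c_def q_def power2_norm_eq_inner by blast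
    show ?thesis using h qpos by (simp add: field_simps)
  qed
  ultimately have "sg * (- c * (x0 \<bullet> grad \<phi> x0) / q) - \<epsilon> * (P * (4 * m * (m - 1) + 2 * m * N)) \<le> 0"
    "sg * (x0 \<bullet> grad \<phi> x0) = \<epsilon> * (P * q * (2 * m))"
    by (simp_all add: qm)
  then have "- c * (\<epsilon> * (P * q * (2 * m))) / q - \<epsilon> * (P * (4 * m * (m - 1) + 2 * m * N)) \<le> 0"
    by (simp add: algebra_simps)
  then have "\<epsilon> * P * (a * (c + N - 2 - a)) \<le> 0"
    using qpos by (simp add: m_def field_simps)
  moreover have "\<epsilon> * P * (a * (c + N - 2 - a)) > 0"
    using \<epsilon>pos Ppos apos a cnn[of x0] by (simp add: c_def)
  ultimately show False by simp
qed



lemma refl_punct: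
  assumes "norm e = 1" "x \<in> punct R" shows "rfl e x \<in> punct R"
  using assms(2) unfolding punct_def mem_Collect_eq refl_norm[OF assms(1)] .

lemma psi_bound:
  fixes \<phi> :: "'a::euclidean_space \<Rightarrow> real"
  assumes e: "norm e = 1" and \<sigma>pos: "\<sigma> > 0" and C: "C \<ge> 0"
    and bnd: "\<forall>x\<in>punct R. \<bar>\<phi> x\<bar> \<le> C * norm x powr (-\<sigma>) \<and> norm (grad \<phi> x) \<le> C * norm x powr (-\<sigma>-1)"
    and diff: "\<forall>x\<in>punct R. \<phi> differentiable at x"
    and x: "x \<in> punct R" and al: "x \<bullet> e > 0"
  shows "\<bar>\<phi> x - \<phi> (rfl e x)\<bar> \<le> (4 * C + 2 * 2 powr (\<sigma> + 1) * C) * (x \<bullet> e) * norm x powr (-\<sigma>-1)"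
proof -
  define r where "r = norm x"
  define \<alpha> where "\<alpha> = x \<bullet> e"
  have r: "r > 0" using x by (simp add: r_def punct_def)
  have ar: "\<alpha> \<le> r" unfolding \<alpha>_def r_def using Cauchy_Schwarz_ineq2[of x e] e by simp
  have \<alpha>: "\<alpha> > 0" using al by (simp add: \<alpha>_def)
  have rx: "rfl e x \<in> punct R" using refl_punct[OF e x] .
  have ee: "e \<bullet> e = 1" using e by (simp add: power2_norm_eq_inner[symmetric])
  have rpow: "r powr (-\<sigma>) = r * r powr (-\<sigma>-1)" using r by (simp add: powr_add[symmetric] powr_diff)
  have K1: "0 \<le> 2 * 2 powr (\<sigma> + 1) * C" using C by simp
  show ?thesis
  proof (cases "\<alpha> \<ge> r / 2")
    case True
    have "\<bar>\<phi> x - \<phi> (rfl e x)\<bar> \<le> \<bar>\<phi> x\<bar> + \<bar>\<phi> (rfl e x)\<bar>" by simp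
    also have "\<dots> \<le> C * r powr (-\<sigma>) + C * r powr (-\<sigma>)"
    proof (rule add_mono)
      show "\<bar>\<phi> x\<bar> \<le> C * r powr (-\<sigma>)" using bnd x by (simp add: r_def)
      have "\<bar>\<phi> (rfl e x)\<bar> \<le> C * norm (rfl e x) powr (-\<sigma>)" using bnd rx by blast
      then show "\<bar>\<phi> (rfl e x)\<bar> \<le> C * r powr (-\<sigma>)" by (simp add: r_def refl_norm[OF e])
    qed
    also have "\<dots> = 2 * C * r * r powr (-\<sigma>-1)" using rpow by simp
    also have "\<dots> \<le> 2 * C * (2 * \<alpha>) * r powr (-\<sigma>-1)"
      using True C by (intro mult_right_mono mult_left_mono) auto
    also have "\<dots> = (4 * C) * \<alpha> * r powr (-\<sigma>-1)" by simp
    also have "\<dots> \<le> (4 * C + 2 * 2 powr (\<sigma> + 1) * C) * \<alpha> * r powr (-\<sigma>-1)"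
      using K1 \<alpha> by (intro mult_right_mono) auto
    finally show ?thesis by (simp add: \<alpha>_def r_def)
  next
    case False
    define w where "w = (- \<alpha>) *\<^sub>R e"
    define y where "y \<tau> = x + \<tau> *\<^sub>R w" for \<tau>
    have xx: "x \<bullet> x = norm x * norm x" by (simp add: power2_eq_square[symmetric] power2_norm_eq_inner)
    have yy: "y \<tau> \<bullet> y \<tau> = r\<^sup>2 - \<alpha>\<^sup>2 * \<tau> * (2 - \<tau>)" for \<tau>
      by (simp add: y_def w_def r_def \<alpha>_def inner_add_left inner_add_right xx ee
          inner_commute power2_eq_square algebra_simps)
    have ynorm: "r / 2 \<le> norm (y \<tau>) \<and> norm (y \<tau>) \<le> r" if "0 \<le> \<tau>" "\<tau> \<le> 2" for \<tau>
    proof -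
      have t1: "0 \<le> \<tau> * (2 - \<tau>)" using that by simp
      have "0 \<le> (\<tau> - 1)\<^sup>2" by simp
      then have t2: "\<tau> * (2 - \<tau>) \<le> 1" by (simp add: power2_eq_square algebra_simps)
      note t = t1 t2
      have h1: "\<alpha>\<^sup>2 * \<tau> * (2 - \<tau>) \<le> \<alpha>\<^sup>2"
        using mult_left_le[OF t2 zero_le_power2[of \<alpha>]] by (simp add: mult.assoc)
      have "\<alpha>\<^sup>2 \<le> (r/2)\<^sup>2" using False \<alpha> by (intro power_mono) auto
      then have h2: "\<alpha>\<^sup>2 \<le> r\<^sup>2 / 4" by (simp add: power_divide)
      have h3: "(r/2)\<^sup>2 = r\<^sup>2 / 4" by (simp add: power_divide)
      have "(r/2)\<^sup>2 \<le> y \<tau> \<bullet> y \<tau>" unfolding yy h3 using h1 h2 zero_le_power2[of r] by linarith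
      moreover have "y \<tau> \<bullet> y \<tau> \<le> r\<^sup>2"
      proof -
        have "0 \<le> \<alpha>\<^sup>2 * (\<tau> * (2 - \<tau>))" using t1 by simp
        then show ?thesis unfolding yy by (simp add: mult.assoc)
      qed
      ultimately have "(r/2)\<^sup>2 \<le> (norm (y \<tau>))\<^sup>2" "(norm (y \<tau>))\<^sup>2 \<le> r\<^sup>2"
        by (simp_all add: power2_norm_eq_inner)
      then show ?thesis using r by (auto intro: power2_le_imp_le)
    qed
    have yR: "y \<tau> \<in> punct R" if "0 \<le> \<tau>" "\<tau> \<le> 2" for \<tau>
    proof -
      have "norm (y \<tau>) > 0" using ynorm[OF that] r by linarith
      moreover have "ereal (norm (y \<tau>)) < R"
      proof -
        have "ereal (norm (y \<tau>)) \<le> ereal (norm x)" using ynorm[OF that] by (simp add: r_def)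
        also have "ereal (norm x) < R" using x by (simp add: punct_def)
        finally show ?thesis .
      qed
      ultimately show ?thesis by (simp add: punct_def)
    qed
    have y2: "y 2 = rfl e x" by (simp add: y_def w_def rfl_def \<alpha>_def)
    have y0: "y 0 = x" by (simp add: y_def)
    have "\<exists>z>0. z < 2 \<and> \<phi> (y 2) - \<phi> (y 0) = (2 - 0) * (w \<bullet> grad \<phi> (y z))"
    proof (rule MVT2)
      fix \<tau> :: real assume "0 \<le> \<tau>" "\<tau> \<le> 2"
      then have "\<phi> differentiable at (x + \<tau> *\<^sub>R w)" using diff yR by (auto simp: y_def)
      from line_deriv1[OF this] show "((\<lambda>\<tau>. \<phi> (y \<tau>)) has_real_derivative w \<bullet> grad \<phi> (y \<tau>)) (at \<tau>)"
        by (simp add: y_def[abs_def])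
    qed simp
    then obtain z where z: "0 < z" "z < 2" "\<phi> (y 2) - \<phi> (y 0) = 2 * (w \<bullet> grad \<phi> (y z))" by auto
    have nw: "norm w = \<alpha>" using \<alpha> e by (simp add: w_def)
    have gz: "norm (grad \<phi> (y z)) \<le> C * norm (y z) powr (-\<sigma>-1)" using bnd yR[of z] z by auto
    have "norm (y z) powr (-\<sigma>-1) \<le> (r/2) powr (-\<sigma>-1)"
      using ynorm[of z] z r \<sigma>pos by (intro powr_mono2') auto
    also have "(r/2) powr (-\<sigma>-1) = 2 powr (\<sigma> + 1) * r powr (-\<sigma>-1)"
      using r by (simp add: powr_divide powr_minus_divide divide_simps powr_add powr_diff)
    finally have yz: "norm (y z) powr (-\<sigma>-1) \<le> 2 powr (\<sigma> + 1) * r powr (-\<sigma>-1)" .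
    have "\<bar>\<phi> x - \<phi> (rfl e x)\<bar> = 2 * \<bar>w \<bullet> grad \<phi> (y z)\<bar>" using z(3) y0 y2 by simp
    also have "\<dots> \<le> 2 * (\<alpha> * norm (grad \<phi> (y z)))"
      using Cauchy_Schwarz_ineq2[of w "grad \<phi> (y z)"] nw by simp
    also have "\<dots> \<le> 2 * (\<alpha> * (C * (2 powr (\<sigma> + 1) * r powr (-\<sigma>-1))))"
      using gz yz \<alpha> C by (intro mult_left_mono order_trans[OF gz]) auto
    also have "\<dots> = (2 * 2 powr (\<sigma> + 1) * C) * \<alpha> * r powr (-\<sigma>-1)" by simp
    also have "\<dots> \<le> (4 * C + 2 * 2 powr (\<sigma> + 1) * C) * \<alpha> * r powr (-\<sigma>-1)"
      using C \<alpha> by (intro mult_right_mono) auto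
    finally show ?thesis by (simp add: \<alpha>_def r_def)
  qed
qed



lemma isCont_rfl: "isCont (rfl e) x"
  unfolding rfl_def[abs_def] by (intro continuous_intros)

lemma parta_core:
  fixes \<phi> :: "'a::euclidean_space \<Rightarrow> real" and sg :: real and e :: 'a
  assumes \<sigma>pos: "\<sigma> > 0" and b: "\<sigma> + 1 < b"
   and cb: "\<And>x::'a. 0 < b * (real DIM('a) - b) - Lcoef p \<xi> \<beta> t x * (b - 1)"
   and C2: "C2_on (punct R) \<phi>" and X: "inX \<sigma> R \<phi>"
   and eq: "\<forall>x\<in>punct R. Lplus p \<xi> \<beta> t \<phi> x = 0"
   and bd: "R \<noteq> \<infinity> \<longrightarrow> zero_bdry R \<phi>"
   and sg: "\<bar>sg\<bar> = 1" and e: "norm e = 1"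
  shows "\<forall>x\<in>punct R. x \<bullet> e > 0 \<longrightarrow> sg * (\<phi> x - \<phi> (rfl e x)) \<le> 0"
proof (rule ccontr)
  assume "\<not> ?thesis"
  then obtain x1 where x1: "x1 \<in> punct R" "x1 \<bullet> e > 0" "sg * (\<phi> x1 - \<phi> (rfl e x1)) > 0"
    by (auto simp: not_le)
  obtain C where C: "C \<ge> 0" "\<forall>x\<in>punct R. \<bar>\<phi> x\<bar> \<le> C * norm x powr (-\<sigma>) \<and> norm (grad \<phi> x) \<le> C * norm x powr (-\<sigma>-1)"
    using inX_bounds[OF X] by blast
  have diff: "\<forall>x\<in>punct R. \<phi> differentiable at x" using C2 by (simp add: C2_on_def)
  define N where "N = real DIM('a)"
  define K where "K = 4 * C + 2 * 2 powr (\<sigma> + 1) * C"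
  define \<psi> where "\<psi> x = \<phi> x - \<phi> (rfl e x)" for x
  define D where "D = punct R \<inter> {x. 0 < x \<bullet> e}"
  have Dsub: "D \<subseteq> punct R" by (auto simp: D_def)
  have openD: "open D" unfolding D_def
    by (intro open_Int open_punct open_Collect_less continuous_intros)
  have pR: "x \<noteq> 0" if "x \<in> punct R" for x using that by (auto simp: punct_def)
  have psiK: "\<bar>\<psi> x\<bar> \<le> K * (x \<bullet> e) * norm x powr (-\<sigma>-1)" if "x \<in> D" for x
    using psi_bound[OF e \<sigma>pos C(1) C(2) diff, of x] that by (simp add: D_def K_def \<psi>_def)
  have psiC: "\<bar>\<psi> x\<bar> \<le> 2 * C * norm x powr (-\<sigma>)" if "x \<in> punct R" for x
  proof -
    have "\<bar>\<psi> x\<bar> \<le> \<bar>\<phi> x\<bar> + \<bar>\<phi> (rfl e x)\<bar>" by (simp add: \<psi>_def)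
    also have "\<dots> \<le> C * norm x powr (-\<sigma>) + C * norm x powr (-\<sigma>)"
    proof (rule add_mono)
      show "\<bar>\<phi> x\<bar> \<le> C * norm x powr (-\<sigma>)" using C that by blast
      have "\<bar>\<phi> (rfl e x)\<bar> \<le> C * norm (rfl e x) powr (-\<sigma>)" using C refl_punct[OF e that] by blast
      then show "\<bar>\<phi> (rfl e x)\<bar> \<le> C * norm x powr (-\<sigma>)" by (simp add: refl_norm[OF e])
    qed
    finally show ?thesis by simp
  qed
  define m where "m = - b / 2"
  define \<Phi> where "\<Phi> = Phi 0 e m"
  have \<Phi>n: "\<Phi> x = (x \<bullet> e) * norm x powr (-b)" if "x \<noteq> 0" for x
    using sq_powr[OF that, of m] by (simp add: \<Phi>_def Phi_def m_def)
  have \<Phi>pos: "\<Phi> x > 0" if "x \<in> D" for x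
  proof -
    have xR: "x \<in> punct R" "x \<bullet> e > 0" using that by (auto simp: D_def)
    have "norm x powr (-b) > 0" using pR[OF xR(1)] by simp
    then show ?thesis using \<Phi>n[OF pR[OF xR(1)]] xR(2) by simp
  qed
  have x1D: "x1 \<in> D" using x1 by (simp add: D_def)
  define \<epsilon> where "\<epsilon> = sg * \<psi> x1 / (2 * \<Phi> x1)"
  have \<epsilon>pos: "\<epsilon> > 0" using x1 \<Phi>pos[OF x1D] by (simp add: \<epsilon>_def \<psi>_def)
  define u where "u x = sg * \<psi> x - \<epsilon> * \<Phi> x" for x
  define \<eta> where "\<eta> = u x1"
  have \<eta>: "\<eta> > 0" using \<Phi>pos[OF x1D] x1 by (auto simp: \<eta>_def u_def \<epsilon>_def \<psi>_def)
  have sg\<psi>: "sg * \<psi> x \<le> \<bar>\<psi> x\<bar>" for x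
  proof -
    have "sg * \<psi> x \<le> \<bar>sg * \<psi> x\<bar>" by simp
    also have "\<dots> = \<bar>\<psi> x\<bar>" using sg by (simp add: abs_mult)
    finally show ?thesis .
  qed
  have psi1: "0 < \<bar>\<psi> x1\<bar>" using x1 by (auto simp: \<psi>_def)
  have Kpos: "K > 0"
  proof -
    have "0 < K * (x1 \<bullet> e) * norm x1 powr (-\<sigma>-1)" using psi1 psiK[OF x1D] by linarith
    then show ?thesis using x1 by (auto simp: zero_less_mult_iff)
  qed
  have Cpos: "C > 0"
  proof -
    have "0 < 2 * C * norm x1 powr (-\<sigma>)" using psi1 psiC[OF x1(1)] by linarith
    then show ?thesis by (auto simp: zero_less_mult_iff)
  qed
  define r0 where "r0 = (\<epsilon> / K) powr (1 / (b - (\<sigma> + 1)))"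
  define M where "M = (2 * C / \<eta>) powr (1 / \<sigma>)"
  define a0 where "a0 = \<eta> / (K * r0 powr (-\<sigma>-1))"
  have r0pos: "r0 > 0" using \<epsilon>pos Kpos by (simp add: r0_def)
  have a0pos: "a0 > 0" using \<eta> Kpos r0pos by (simp add: a0_def)
  have Sbound: "r0 \<le> norm x \<and> norm x \<le> M \<and> a0 \<le> x \<bullet> e" if "x \<in> D" "u x \<ge> \<eta>" for x
  proof -
    have xR: "x \<in> punct R" using that Dsub by auto
    have nx: "norm x > 0" using pR[OF xR] by simp
    have al: "x \<bullet> e > 0" using that by (simp add: D_def)
    have ep: "\<epsilon> * \<Phi> x > 0" using \<epsilon>pos \<Phi>pos[OF that(1)] by simp
    have "\<eta> \<le> 2 * C * norm x powr (-\<sigma>)" using that(2) ep sg\<psi>[of x] psiC[OF xR] by (simp add: u_def)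
    then have "norm x \<le> M" unfolding M_def using H1[OF nx \<eta> \<sigma>pos, of "2 * C"] by (simp add: mult.assoc)
    moreover have "r0 \<le> norm x"
    proof -
      have "\<epsilon> * ((x \<bullet> e) * norm x powr (-b)) \<le> K * (x \<bullet> e) * norm x powr (-\<sigma>-1)"
        using that(2) \<eta> sg\<psi>[of x] psiK[OF that(1)] \<Phi>n[OF pR[OF xR]] by (simp add: u_def)
      then have "(x \<bullet> e) * (\<epsilon> * norm x powr (-b)) \<le> (x \<bullet> e) * (K * norm x powr (-\<sigma>-1))"
        by (simp add: ac_simps)
      then have "\<epsilon> * norm x powr (-b) \<le> K * norm x powr (-\<sigma>-1)" using al by simp
      then have "\<epsilon> * norm x powr (-b) \<le> K * norm x powr (-(\<sigma>+1))" by simp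
      then show ?thesis unfolding r0_def by (rule H2[OF nx \<epsilon>pos Kpos b])
    qed
    moreover have "a0 \<le> x \<bullet> e"
    proof -
      have "norm x powr (-\<sigma>-1) \<le> r0 powr (-\<sigma>-1)"
        using \<open>r0 \<le> norm x\<close> r0pos \<sigma>pos by (intro powr_mono2') auto
      then have "\<eta> \<le> K * (x \<bullet> e) * r0 powr (-\<sigma>-1)"
        using that(2) ep sg\<psi>[of x] psiK[OF that(1)] Kpos al
        by (smt (verit, best) mult_left_mono mult_pos_pos u_def)
      then show ?thesis unfolding a0_def using Kpos r0pos
        by (simp add: pos_divide_le_eq mult.commute mult.left_commute)
    qed
    ultimately show ?thesis by simp
  qed
  define T where "T = {x::'a. r0 \<le> norm x} \<inter> {x. norm x \<le> M} \<inter> {x. a0 \<le> x \<bullet> e}"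
  have Tc: "closed T" unfolding T_def
    by (intro closed_Int closed_Collect_le continuous_intros)
  have Tb: "bounded T" unfolding T_def
    by (rule bounded_subset[OF bounded_cball[of 0 M]]) auto
  have cont: "continuous_on D u"
  proof (intro continuous_at_imp_continuous_on ballI)
    fix x :: 'a assume x: "x \<in> D"
    then have xR: "x \<in> punct R" using Dsub by auto
    have "isCont \<phi> x" using C2_diff(1)[OF C2 xR] by (rule differentiable_imp_continuous_within)
    moreover have "isCont (\<lambda>x. \<phi> (rfl e x)) x"
      by (rule isCont_o2[OF isCont_rfl]) (rule differentiable_imp_continuous_within[OF C2_diff(1)[OF C2 refl_punct[OF e xR]]])
    moreover have "isCont \<Phi> x" unfolding \<Phi>_def by (rule isCont_Phi[OF pR[OF xR]])
    ultimately show "isCont u x" unfolding u_def[abs_def] \<psi>_def by (intro continuous_intros) auto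
  qed
  have "\<exists>x0\<in>D. \<forall>x\<in>D. u x \<le> u x0"
  proof (rule exists_max[OF openD Dsub cont x1D \<eta>_def \<eta> Tc Tb])
    show "{x \<in> D. \<eta> \<le> u x} \<subseteq> T" using Sbound by (auto simp: T_def)
  next
    fix z :: 'a assume "z \<in> T" "ereal (norm z) < R"
    then show "z \<in> D" using r0pos a0pos by (auto simp: T_def D_def punct_def)
  next
    fix z :: 'a assume z: "ereal (norm z) = R"
    then have zb: "zero_bdry R \<phi>" using bd by auto
    have h2: "\<eta> / 2 > 0" using \<eta> by simp
    from bdry_metric[OF zb z h2] obtain d1 where d1: "d1 > 0" "\<forall>x\<in>punct R. x \<noteq> z \<and> dist x z < d1 \<longrightarrow> \<bar>\<phi> x\<bar> < \<eta> / 2"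
      by blast
    have z': "ereal (norm (rfl e z)) = R" using z by (simp add: refl_norm[OF e])
    from bdry_metric[OF zb z' h2] obtain d2 where d2: "d2 > 0" "\<forall>x\<in>punct R. x \<noteq> rfl e z \<and> dist x (rfl e z) < d2 \<longrightarrow> \<bar>\<phi> x\<bar> < \<eta> / 2"
      by blast
    show "\<exists>d>0. \<forall>x\<in>D. dist x z < d \<longrightarrow> u x < \<eta>"
    proof (intro exI[of _ "min d1 d2"] conjI ballI impI)
      fix x assume x: "x \<in> D" "dist x z < min d1 d2"
      have xR: "x \<in> punct R" using x Dsub by auto
      have xz: "x \<noteq> z" using xR z by (auto simp: punct_def)
      then have "\<bar>\<phi> x\<bar> < \<eta> / 2" using d1 xR x by auto
      moreover have "\<bar>\<phi> (rfl e x)\<bar> < \<eta> / 2"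
      proof -
        have "rfl e x \<noteq> rfl e z" using xz refl_refl[OF e] by metis
        moreover have "dist (rfl e x) (rfl e z) < d2" using x refl_dist[OF e] by simp
        ultimately show ?thesis using d2 refl_punct[OF e xR] by blast
      qed
      moreover have "\<epsilon> * \<Phi> x > 0" using \<epsilon>pos \<Phi>pos[OF x(1)] by simp
      ultimately show "u x < \<eta>" using sg\<psi>[of x] by (simp add: u_def \<psi>_def)
    qed (use d1 d2 in simp)
  qed
  then obtain x0 where x0: "x0 \<in> D" "\<forall>x\<in>D. u x \<le> u x0" by blast
  have x0R: "x0 \<in> punct R" using x0 Dsub by auto
  have rx0R: "rfl e x0 \<in> punct R" using refl_punct[OF e x0R] .
  have nz: "x0 \<noteq> 0" using pR[OF x0R] .
  define G' where "G' v s = sg * (v \<bullet> grad \<phi> (x0 + s *\<^sub>R v) - rfl e v \<bullet> grad \<phi> (rfl e x0 + s *\<^sub>R rfl e v))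
      - \<epsilon> * dPhi 0 e m (x0 + s *\<^sub>R v) v" for v s
  define Lv where "Lv v = sg * (hess \<phi> x0 v - hess \<phi> (rfl e x0) (rfl e v)) - \<epsilon> * d2Phi 0 e m x0 v" for v
  have line: "G' v 0 = 0 \<and> Lv v \<le> 0" for v
  proof (rule local_line[OF openD x0])
    fix s assume s: "x0 + s *\<^sub>R v \<in> D"
    have sR: "x0 + s *\<^sub>R v \<in> punct R" using s Dsub by auto
    have sR': "rfl e x0 + s *\<^sub>R rfl e v \<in> punct R" using refl_punct[OF e sR] by (simp add: refl_lin)
    have "((\<lambda>s. sg * (\<phi> (x0 + s *\<^sub>R v) - \<phi> (rfl e x0 + s *\<^sub>R rfl e v)) - \<epsilon> * \<Phi> (x0 + s *\<^sub>R v)) has_real_derivative G' v s) (at s)"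
      unfolding G'_def \<Phi>_def
      by (intro DERIV_diff DERIV_cmult line_deriv1 Phi_d1 C2_diff(1)[OF C2 sR] C2_diff(1)[OF C2 sR'] pR[OF sR])
    then show "((\<lambda>s. u (x0 + s *\<^sub>R v)) has_real_derivative G' v s) (at s)"
      by (simp add: u_def \<psi>_def refl_lin)
  next
    show "(G' v has_real_derivative Lv v) (at 0)"
      unfolding G'_def[abs_def] Lv_def
      by (intro DERIV_diff DERIV_cmult line_deriv2 Phi_d2 C2_diff(2)[OF C2 x0R] C2_diff(2)[OF C2 rx0R] nz)
  qed
  define q where "q = x0 \<bullet> x0"
  have qpos: "q > 0" using nz by (simp add: q_def)
  define P where "P = q powr (m - 1)"
  have Ppos: "P > 0" using qpos by (simp add: P_def)
  have qm: "q powr m = P * q" using qpos by (simp add: P_def powr_diff)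
  define c where "c = Lcoef p \<xi> \<beta> t x0"
  define \<alpha> where "\<alpha> = x0 \<bullet> e"
  have \<alpha>pos: "\<alpha> > 0" using x0 by (simp add: \<alpha>_def D_def)
  have S1: "(\<Sum>i\<in>Basis. Lv i) \<le> 0" using line by (intro sum_nonpos) auto
  have S2: "(\<Sum>i\<in>Basis. Lv i) = sg * (laplacian \<phi> x0 - laplacian \<phi> (rfl e x0)) - \<epsilon> * (P * (4 * m * \<alpha> + \<alpha> * (4 * m * (m - 1) + 2 * m * N)))"
    unfolding Lv_def sum_subtractf sum_distrib_left[symmetric] hess_sum hess_sum_refl[OF e] sum_d2Phi[OF nz]
    by (simp add: P_def q_def N_def \<alpha>_def)
  have S3: "sg * (x0 \<bullet> grad \<phi> x0 - rfl e x0 \<bullet> grad \<phi> (rfl e x0)) = \<epsilon> * (P * q * (\<alpha> + \<alpha> * (2 * m)))"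
    using line[of x0] dPhi_self[OF nz, of 0 e m] qm[unfolded q_def] by (simp add: G'_def \<alpha>_def q_def)
  have L1: "laplacian \<phi> x0 = c * (x0 \<bullet> grad \<phi> x0) / q"
  proof -
    have h: "- laplacian \<phi> x0 + c * ((x0 \<bullet> grad \<phi> x0) / q) = 0"
      using eq x0R unfolding Lplus_def c_def q_def power2_norm_eq_inner by blast
    show ?thesis using h qpos by (simp add: field_simps)
  qed
  have L2: "laplacian \<phi> (rfl e x0) = c * (rfl e x0 \<bullet> grad \<phi> (rfl e x0)) / q"
  proof -
    have cc: "Lcoef p \<xi> \<beta> t (rfl e x0) = c" unfolding c_def by (rule Lcoef_norm) (simp add: refl_norm[OF e])
    have qq: "rfl e x0 \<bullet> rfl e x0 = q" by (simp add: q_def refl_inner2[OF e])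
    have h: "- laplacian \<phi> (rfl e x0) + c * ((rfl e x0 \<bullet> grad \<phi> (rfl e x0)) / q) = 0"
    proof -
      have "Lplus p \<xi> \<beta> t \<phi> (rfl e x0) = 0" using eq rx0R by blast
      then show ?thesis unfolding Lplus_def power2_norm_eq_inner cc qq .
    qed
    show ?thesis using h qpos by (simp add: field_simps)
  qed
  have "sg * (laplacian \<phi> x0 - laplacian \<phi> (rfl e x0)) = c / q * (sg * (x0 \<bullet> grad \<phi> x0 - rfl e x0 \<bullet> grad \<phi> (rfl e x0)))"
    unfolding L1 L2 using qpos by (simp add: field_simps)
  also have "\<dots> = c * \<epsilon> * P * \<alpha> * (1 + 2 * m)" unfolding S3 using qpos by (simp add: field_simps)
  finally have S4: "sg * (laplacian \<phi> x0 - laplacian \<phi> (rfl e x0)) = c * \<epsilon> * P * \<alpha> * (1 + 2 * m)" .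
  have "\<epsilon> * P * \<alpha> * (b * (N - b) - c * (b - 1)) \<le> 0"
    using S1 unfolding S2 S4 by (simp add: m_def algebra_simps)
  moreover have "\<epsilon> * P * \<alpha> * (b * (N - b) - c * (b - 1)) > 0"
    using \<epsilon>pos Ppos \<alpha>pos cb[of x0] by (simp add: c_def N_def)
  ultimately show False by simp
qed



lemma radial_from_refl:
  fixes \<phi> :: "'a::euclidean_space \<Rightarrow> real"
  assumes H: "\<And>e x. norm e = 1 \<Longrightarrow> x \<in> punct R \<Longrightarrow> x \<bullet> e > 0 \<Longrightarrow> \<phi> x = \<phi> (rfl e x)"
    and x: "x \<in> punct R" and y: "y \<in> punct R" and n: "norm x = norm y"
  shows "\<phi> x = \<phi> y"
proof (cases "x = y")
  case True then show ?thesis by simp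
next
  case False
  define d where "d = norm (x - y)"
  have d: "d > 0" using False by (simp add: d_def)
  define e where "e = (1 / d) *\<^sub>R (x - y)"
  have e: "norm e = 1" using d by (simp add: e_def d_def)
  have xx: "x \<bullet> x = y \<bullet> y" using n by (simp add: power2_norm_eq_inner[symmetric])
  have dd: "d\<^sup>2 = x \<bullet> x - 2 * (x \<bullet> y) + y \<bullet> y"
    by (simp add: d_def power2_norm_eq_inner inner_diff_left inner_diff_right inner_commute)
  have xe: "x \<bullet> e = d / 2"
  proof -
    have "x \<bullet> e = (x \<bullet> x - x \<bullet> y) / d" by (simp add: e_def inner_diff_right)
    also have "x \<bullet> x - x \<bullet> y = d\<^sup>2 / 2" using dd xx by simp
    finally show ?thesis using d by (simp add: power2_eq_square)
  qed
  have "(2 * (x \<bullet> e)) *\<^sub>R e = x - y" unfolding xe using d by (simp add: e_def)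
  then have "rfl e x = y" by (simp add: rfl_def)
  moreover have "\<phi> x = \<phi> (rfl e x)" using H[OF e x] xe d by simp
  ultimately show ?thesis by simp
qed

lemma zero_from_radial:
  fixes \<phi> :: "'a::euclidean_space \<Rightarrow> real"
  assumes rad: "\<And>x y. x \<in> punct R \<Longrightarrow> y \<in> punct R \<Longrightarrow> norm x = norm y \<Longrightarrow> \<phi> x = \<phi> y"
    and mean: "\<forall>r. 0 < r \<and> ereal r < R \<longrightarrow> sphere_integral (\<lambda>\<theta>. \<phi> (r *\<^sub>R \<theta>)) = 0"
    and x: "x \<in> punct R"
  shows "\<phi> x = 0"
proof -
  define r where "r = norm x"
  have r: "0 < r" "ereal r < R" using x by (auto simp: r_def punct_def)
  have "integral (ball 0 1) (\<lambda>z::'a. \<phi> (r *\<^sub>R (z /\<^sub>R norm z))) = integral (ball 0 1) (\<lambda>z::'a. \<phi> x * 1)"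
  proof (rule integral_spike[OF negligible_sing[of 0]])
    fix z :: 'a assume z: "z \<in> ball 0 1 - {0}"
    then have nz: "norm z > 0" by simp
    have nn: "norm (r *\<^sub>R (z /\<^sub>R norm z)) = r" using nz r by simp
    have "r *\<^sub>R (z /\<^sub>R norm z) \<in> punct R" unfolding punct_def mem_Collect_eq nn using r by simp
    then show "\<phi> x * 1 = \<phi> (r *\<^sub>R (z /\<^sub>R norm z))" using rad[OF x] nn by (simp add: r_def)
  qed
  also have "\<dots> = \<phi> x * measure lebesgue (ball (0::'a) 1)"
    by (simp only: integral_mult_right lmeasure_integral[OF lmeasurable_ball])
  finally have I: "integral (ball 0 1) (\<lambda>z::'a. \<phi> (r *\<^sub>R (z /\<^sub>R norm z))) = \<phi> x * measure lebesgue (ball (0::'a) 1)" .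
  have "sphere_integral (\<lambda>\<theta>::'a. \<phi> (r *\<^sub>R \<theta>)) = 0" using mean r by blast
  then have "real DIM('a) * (\<phi> x * measure lebesgue (ball (0::'a) 1)) = 0"
    unfolding sphere_integral_def I .
  moreover have "0 < measure lebesgue (ball (0::'a) 1)" by simp
  ultimately show ?thesis by simp
qed

theorem lemma2p4:
  fixes p \<xi> \<beta> \<sigma> :: real and R t :: ereal
  assumes "DIM('a::euclidean_space) \<ge> 3"
    and "real DIM('a) / (real DIM('a) - 1) < p" and "p < 2"
    and "\<xi> = (p - 1) * (real DIM('a) - 1)"
    and "\<beta> = (p - 1) / (\<xi> - 1)"
    and "\<sigma> = (2 - p) / (p - 1)"
    and "0 < R" and "0 \<le> t"
  shows "(\<forall>\<phi> :: 'a \<Rightarrow> real.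
            C2_on (punct R) \<phi> \<and> inX1 \<sigma> R \<phi> \<and>
            (\<forall>x\<in>punct R. Lplus p \<xi> \<beta> t \<phi> x = 0) \<and>
            (R \<noteq> \<infinity> \<longrightarrow> zero_bdry R \<phi>)
          \<longrightarrow> (\<forall>x\<in>punct R. \<phi> x = 0))
       \<and> (\<forall>\<phi> :: 'a \<Rightarrow> real.
            C2_on (punct R) \<phi> \<and> inX \<sigma> R \<phi> \<and>
            (\<forall>x\<in>punct R. Lminus p \<xi> \<beta> t \<phi> x = 0) \<and>
            (R \<noteq> \<infinity> \<longrightarrow> zero_bdry R \<phi>)
          \<longrightarrow> (if R \<noteq> \<infinity> then (\<forall>x\<in>punct R. \<phi> x = 0)
               else (\<exists>c. \<forall>x\<in>punct R. \<phi> x = c)))"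
proof -
  define N where "N = real DIM('a)"
  have N3: "N \<ge> 3" using assms(1) by (simp add: N_def)
  have pN: "N < p * (N - 1)" using assms(2) N3 by (simp add: N_def pos_divide_less_eq)
  have p1: "p > 1" using pN N3 by (smt (verit) mult_le_cancel_right2)
  have P1: "(p - 1) * (N - 1) > 1" using pN by (simp add: algebra_simps)
  have xi1: "\<xi> - 1 > 0" using P1 assms(4) by (simp add: N_def)
  have \<beta>pos: "\<beta> > 0" using xi1 p1 assms(5) by simp
  have \<sigma>pos: "\<sigma> > 0" using p1 assms(3,6) by simp
  have \<sigma>N: "\<sigma> < N - 2"
  proof -
    have "2 - p < (N - 2) * (p - 1)" using pN by (simp add: algebra_simps)
    then show ?thesis using p1 assms(6) by (simp add: pos_divide_less_eq)
  qed
  have cb0: "0 \<le> Lcoef p \<xi> \<beta> t x \<and> Lcoef p \<xi> \<beta> t x \<le> p / \<beta>" for x :: 'a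
  proof -
    have p0: "0 < p" using p1 by simp
    show ?thesis using Lcoef_bounds[OF assms(8) \<beta>pos p0] by blast
  qed
  define b where "b = \<sigma> + 3 / 2"
  have b: "\<sigma> + 1 < b" by (simp add: b_def)
  define P where "P = p - 1"
  define u where "u = 1 / P"
  have Ppos: "P > 0" using p1 by (simp add: P_def)
  have Pu: "P * u = 1" using Ppos by (simp add: u_def)
  have \<sigma>u: "\<sigma> = u - 1" using Ppos unfolding assms(6) u_def P_def by (simp add: field_simps)
  have pb: "p / \<beta> = (N - 1) * (P + 1) - 1 - u"
    using Ppos xi1 unfolding assms(5) u_def
    by (simp add: field_simps assms(4) N_def P_def)
  have bid: "b * (N - b) - (p / \<beta>) * (b - 1) = (u - 1 / 2 + P * (N - 1)) / 2"
    unfolding pb b_def \<sigma>u using Pu by algebra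
  have bpos0: "0 < b * (N - b) - (p / \<beta>) * (b - 1)"
  proof -
    have "u > 1 / 2" using p1 assms(3) by (simp add: u_def P_def field_simps)
    then show ?thesis unfolding bid using P1 by (simp add: P_def)
  qed
  have cb: "0 < b * (real DIM('a) - b) - Lcoef p \<xi> \<beta> t x * (b - 1)" for x :: 'a
  proof -
    have "Lcoef p \<xi> \<beta> t x * (b - 1) \<le> (p / \<beta>) * (b - 1)"
      using cb0[of x] \<sigma>pos by (intro mult_right_mono) (auto simp: b_def)
    then show ?thesis using bpos0 by (simp add: N_def)
  qed
  show ?thesis
  proof (intro conjI allI impI)
    fix \<phi> :: "'a \<Rightarrow> real"
    assume A: "C2_on (punct R) \<phi> \<and> inX1 \<sigma> R \<phi> \<and> (\<forall>x\<in>punct R. Lplus p \<xi> \<beta> t \<phi> x = 0) \<and> (R \<noteq> \<infinity> \<longrightarrow> zero_bdry R \<phi>)"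
    then have X: "inX \<sigma> R \<phi>" and mean: "\<forall>r. 0 < r \<and> ereal r < R \<longrightarrow> sphere_integral (\<lambda>\<theta>. \<phi> (r *\<^sub>R \<theta>)) = 0"
      by (auto simp: inX1_def)
    have refl_eq: "\<phi> x = \<phi> (rfl e x)" if e: "norm e = 1" and x: "x \<in> punct R" "x \<bullet> e > 0" for e x :: 'a
    proof -
      have "1 * (\<phi> x - \<phi> (rfl e x)) \<le> 0"
        using parta_core[where sg=1, OF \<sigma>pos b cb _ X _ _ _ e] A x by auto
      moreover have "(-1) * (\<phi> x - \<phi> (rfl e x)) \<le> 0"
        using parta_core[where sg="-1", OF \<sigma>pos b cb _ X _ _ _ e] A x by auto
      ultimately show ?thesis by simp
    qed
    have rad: "\<phi> x = \<phi> y" if "x \<in> punct R" "y \<in> punct R" "norm x = norm y" for x y :: 'a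
      by (rule radial_from_refl[OF refl_eq that])
    show "\<forall>x\<in>punct R. \<phi> x = 0"
      using zero_from_radial[OF rad mean] by blast
  next
    fix \<phi> :: "'a \<Rightarrow> real"
    assume A: "C2_on (punct R) \<phi> \<and> inX \<sigma> R \<phi> \<and> (\<forall>x\<in>punct R. Lminus p \<xi> \<beta> t \<phi> x = 0) \<and> (R \<noteq> \<infinity> \<longrightarrow> zero_bdry R \<phi>)"
    have cnn: "\<And>x::'a. 0 \<le> Lcoef p \<xi> \<beta> t x" using cb0 by blast
    have \<sigma>N': "\<sigma> < real DIM('a) - 2" using \<sigma>N by (simp add: N_def)
    have z: "\<forall>x\<in>punct R. \<phi> x = 0"
    proof
      fix x :: 'a assume x: "x \<in> punct R"
      have "1 * \<phi> x \<le> 0" using partb[where sg=1 and \<phi>=\<phi> and R=R, OF \<sigma>pos \<sigma>N' cnn] A x by auto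
      moreover have "(-1) * \<phi> x \<le> 0" using partb[where sg="-1" and \<phi>=\<phi> and R=R, OF \<sigma>pos \<sigma>N' cnn] A x by auto
      ultimately show "\<phi> x = 0" by simp
    qed
    then show "if R \<noteq> \<infinity> then (\<forall>x\<in>punct R. \<phi> x = 0) else (\<exists>c. \<forall>x\<in>punct R. \<phi> x = c)"
      by auto
  qed
qed

end
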